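(* Let $d,n\ge 1$, let $\boldsymbol{a}_1,\ldots,\boldsymbol{a}_n\in\mathbf{R}^d$, let $w_1,\ldots,w_n>0$, fix $\varepsilon>0$ and $1\le p\le 2$. Define $\Phi(\boldsymbol{x})=\sum_{j=1}^n w_j\,(\lVert\boldsymbol{x}-\boldsymbol{a}_j\rVert^2+\varepsilon)^{p/2}$. Let $\boldsymbol{x}^{(0)}\in\mathbf{R}^d$ be arbitrary and define, for $t\ge 0$, $$\mu_j^{(t)}=w_j\,(\lVert\boldsymbol{x}^{(t)}-\boldsymbol{a}_j\rVert^2+\varepsilon)^{p/2-1},\qquad \boldsymbol{x}^{(t+1)}=\frac{\sum_j\mu_j^{(t)}\boldsymbol{a}_j}{\sum_j\mu_j^{(t)}}.$$ Then $\Phi$ has a unique stationary point $\boldsymbol{x}^\star$, every convergent subsequence of $(\boldsymbol{x}^{(t)})$ has limit $\boldsymbol{x}^\star$, and the whole sequence $(\boldsymbol{x}^{(t)})$ converges to $\boldsymbol{x}^\star$.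
   Context: $\lVert\cdot\rVert$ is the Euclidean norm on $\mathbf{R}^d$. A stationary point of $\Phi$ is a point where its gradient vanishes. *)

theory Defs
  imports "HOL-Analysis.Analysis"
begin

definition stationary_point :: "('a::euclidean_space \<Rightarrow> real) \<Rightarrow> 'a \<Rightarrow> bool" where
  "stationary_point f x \<longleftrightarrow> (f has_derivative (\<lambda>h. 0)) (at x)"

definition Phi :: "nat \<Rightarrow> (nat \<Rightarrow> 'a::euclidean_space) \<Rightarrow> (nat \<Rightarrow> real) \<Rightarrow> real \<Rightarrow> real \<Rightarrow> 'a \<Rightarrow> real" where
  "Phi n a w eps p x = (\<Sum>j<n. w j * (norm (x - a j) ^ 2 + eps) powr (p / 2))"

definition mu :: "(nat \<Rightarrow> 'a::euclidean_space) \<Rightarrow> (nat \<Rightarrow> real) \<Rightarrow> real \<Rightarrow> real \<Rightarrow> 'a \<Rightarrow> nat \<Rightarrow> real" where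
  "mu a w eps p x j = w j * (norm (x - a j) ^ 2 + eps) powr (p / 2 - 1)"

end

theory Submission
  imports Defs
begin


lemma rho_strict:
  fixes e p x y :: real
  assumes "e > 0" "1 \<le> p" "0 \<le> x" "x < y"
  shows "x * (x + e) powr (p - 2) < y * (y + e) powr (p - 2)"
proof -
  have eq: "z * (z + e) powr (p - 2) = z / (z + e) * (z + e) powr (p - 1)" if "z \<ge> 0" for z
  proof -
    have "(z + e) powr (p - 1) = (z + e) powr (p - 2) * (z + e)"
    proof -
      have "(z + e) powr (p - 1) = (z + e) powr ((p - 2) + 1)" by simp
      also have "\<dots> = (z + e) powr (p - 2) * (z + e)"
        using powr_add[of "z+e" "p-2" 1] that assms by simp
      finally show ?thesis .
    qed
    then show ?thesis using that assms by (simp add: field_simps)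
  qed
  have a: "x / (x + e) < y / (y + e)" using assms by (simp add: field_simps)
  have b: "(x + e) powr (p - 1) \<le> (y + e) powr (p - 1)"
    using assms by (intro powr_mono2) auto
  have c: "0 < (x + e) powr (p - 1)" using assms by simp
  have "x / (x + e) * (x + e) powr (p - 1) < y / (y + e) * (x + e) powr (p - 1)"
    using mult_strict_right_mono[OF a c] .
  also have "\<dots> \<le> y / (y + e) * (y + e) powr (p - 1)"
    using b assms by (intro mult_left_mono) auto
  finally show ?thesis using eq assms by simp
qed

lemma sU_strict:
  fixes u v :: "'a::euclidean_space"
  assumes "e > 0" "1 \<le> p" "norm v < norm u"
  shows "(norm v ^ 2 + e) powr (p/2 - 1) * norm v < (norm u ^ 2 + e) powr (p/2 - 1) * norm u"
proof -
  define s where "s = (norm u ^ 2 + e) powr (p/2 - 1)"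
  define t where "t = (norm v ^ 2 + e) powr (p/2 - 1)"
  have sq: "((z ^ 2 + e) powr (p/2 - 1) * z) ^ 2 = z^2 * (z^2 + e) powr (p - 2)" if "z \<ge> 0" for z :: real
  proof -
    have "((z ^ 2 + e) powr (p/2 - 1))^2 = (z^2 + e) powr (p - 2)"
      unfolding power2_eq_square powr_add[symmetric] by simp
    then show ?thesis by (simp add: power_mult_distrib)
  qed
  have "norm v ^ 2 < norm u ^ 2" using assms by (simp add: power_strict_mono)
  then have "(t * norm v)^2 < (s * norm u)^2"
    using sq[of "norm v"] sq[of "norm u"] rho_strict[OF assms(1,2), of "norm v ^ 2" "norm u ^ 2"]
    unfolding s_def t_def by simp
  then have "t * norm v < s * norm u"
    by (rule power_less_imp_less_base) (simp add: s_def)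
  then show ?thesis unfolding s_def t_def .
qed

lemma mono_grad:
  fixes u v :: "'a::euclidean_space"
  assumes "e > 0" "1 \<le> p" "u \<noteq> v"
  shows "0 < inner ((norm u ^ 2 + e) powr (p/2 - 1) *\<^sub>R u - (norm v ^ 2 + e) powr (p/2 - 1) *\<^sub>R v) (u - v)"
proof -
  define s where "s = (norm u ^ 2 + e) powr (p/2 - 1)"
  define t where "t = (norm v ^ 2 + e) powr (p/2 - 1)"
  have "norm u ^ 2 + e > 0" "norm v ^ 2 + e > 0" using assms
    by (smt (verit) zero_le_power2)+
  then have sp: "s > 0" "t > 0" by (auto simp: s_def t_def)
  have E: "inner (s *\<^sub>R u - t *\<^sub>R v) (u - v) = s * norm u ^ 2 + t * norm v ^ 2 - (s + t) * inner u v"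
    by (simp add: inner_diff_left inner_diff_right power2_norm_eq_inner inner_commute algebra_simps)
  show ?thesis
  proof (cases "norm u = norm v")
    case True
    then have "s = t" by (simp add: s_def t_def)
    then have "inner (s *\<^sub>R u - t *\<^sub>R v) (u - v) = s * norm (u - v) ^ 2"
      by (simp add: power2_norm_eq_inner inner_diff_left inner_diff_right algebra_simps)
    moreover have "norm (u - v) > 0" using assms by simp
    ultimately show ?thesis using sp unfolding s_def[symmetric] t_def[symmetric] by simp
  next
    case False
    have cs: "inner u v \<le> norm u * norm v" by (rule norm_cauchy_schwarz)
    have "s * norm u ^ 2 + t * norm v ^ 2 - (s + t) * (norm u * norm v) \<le> s * norm u ^ 2 + t * norm v ^ 2 - (s + t) * inner u v"
      using cs sp by (intro diff_left_mono mult_left_mono) auto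
    moreover have "s * norm u ^ 2 + t * norm v ^ 2 - (s + t) * (norm u * norm v) = (norm u - norm v) * (s * norm u - t * norm v)"
      by (simp add: power2_eq_square algebra_simps)
    moreover have "0 < (norm u - norm v) * (s * norm u - t * norm v)"
    proof (cases "norm v < norm u")
      case True
      then show ?thesis using sU_strict[OF assms(1,2) True] by (simp add: s_def t_def mult_pos_pos)
    next
      case f: False
      then have "norm u < norm v" using False by simp
      then show ?thesis using sU_strict[OF assms(1,2), of u v] by (simp add: s_def t_def mult_neg_neg)
    qed
    ultimately show ?thesis using E unfolding s_def[symmetric] t_def[symmetric] by linarith
  qed
qed


lemma norm_sq_deriv:
  fixes b y :: "'a::euclidean_space"
  shows "((\<lambda>x. norm (x - b) ^ 2 + eps) has_derivative (\<lambda>h. 2 * inner (y - b) h)) (at y)"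
  unfolding power2_norm_eq_inner
  by (auto intro!: derivative_eq_intros simp: inner_commute algebra_simps)

lemma term_deriv:
  fixes b y :: "'a::euclidean_space"
  assumes "eps > 0"
  shows "((\<lambda>x. (norm (x - b) ^ 2 + eps) powr c) has_derivative
           (\<lambda>h. (norm (y - b) ^ 2 + eps) powr (c - 1) * (2 * c * inner (y - b) h))) (at y)"
proof -
  have pos: "0 < norm (y - b) ^ 2 + eps" using assms by (smt (verit) zero_le_power2)
  have "((\<lambda>x. (norm (x - b) ^ 2 + eps) powr c) has_derivative
     (\<lambda>h. ((norm (y - b) ^ 2 + eps) powr c) * (0 * ln (norm (y - b) ^ 2 + eps) + 2 * inner (y - b) h * c / (norm (y - b) ^ 2 + eps)))) (at y)"
    by (rule has_derivative_powr[OF norm_sq_deriv has_derivative_const pos]) simp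
  moreover have "((norm (y - b) ^ 2 + eps) powr c) * (0 * ln (norm (y - b) ^ 2 + eps) + 2 * inner (y - b) h * c / (norm (y - b) ^ 2 + eps))
      = (norm (y - b) ^ 2 + eps) powr (c - 1) * (2 * c * inner (y - b) h)" for h
    using pos by (simp add: powr_diff)
  ultimately show ?thesis by simp
qed

definition G :: "nat \<Rightarrow> (nat \<Rightarrow> 'a::euclidean_space) \<Rightarrow> (nat \<Rightarrow> real) \<Rightarrow> real \<Rightarrow> real \<Rightarrow> 'a \<Rightarrow> 'a" where
  "G n a w eps p y = (\<Sum>j<n. mu a w eps p y j *\<^sub>R (y - a j))"

lemma Phi_deriv:
  fixes y :: "'a::euclidean_space"
  assumes "eps > 0"
  shows "(Phi n a w eps p has_derivative (\<lambda>h. p * inner (G n a w eps p y) h)) (at y)"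
proof -
  have "((\<lambda>x. \<Sum>j<n. w j * (norm (x - a j) ^ 2 + eps) powr (p / 2)) has_derivative
     (\<lambda>h. \<Sum>j<n. w j * ((norm (y - a j) ^ 2 + eps) powr (p/2 - 1) * (2 * (p/2) * inner (y - a j) h)))) (at y)"
    by (intro has_derivative_sum has_derivative_mult_right term_deriv assms)
  moreover have "(\<Sum>j<n. w j * ((norm (y - a j) ^ 2 + eps) powr (p/2 - 1) * (2 * (p/2) * inner (y - a j) h)))
     = p * inner (G n a w eps p y) h" for h
    by (simp add: G_def mu_def inner_sum_left sum_distrib_left algebra_simps)
  ultimately show ?thesis unfolding Phi_def[abs_def] by simp
qed

lemma stationary_iff:
  fixes y :: "'a::euclidean_space"
  assumes "eps > 0" "p > 0"
  shows "stationary_point (Phi n a w eps p) y \<longleftrightarrow> G n a w eps p y = 0"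
proof
  assume "stationary_point (Phi n a w eps p) y"
  then have "(\<lambda>h. p * inner (G n a w eps p y) h) = (\<lambda>h. 0)"
    unfolding stationary_point_def using has_derivative_unique Phi_deriv[OF assms(1)] by blast
  then have "p * inner (G n a w eps p y) (G n a w eps p y) = 0" by metis
  then show "G n a w eps p y = 0" using assms by simp
next
  assume "G n a w eps p y = 0"
  then show "stationary_point (Phi n a w eps p) y"
    using Phi_deriv[OF assms(1), of n a w p y] unfolding stationary_point_def by simp
qed

lemma G_unique:
  fixes y z :: "'a::euclidean_space"
  assumes "eps > 0" "1 \<le> p" "n \<ge> 1" "\<And>j. j < n \<Longrightarrow> w j > 0"
    and "G n a w eps p y = 0" "G n a w eps p z = 0"
  shows "y = z"
proof (rule ccontr)
  assume ne: "y \<noteq> z"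
  define f where "f j = w j * inner ((norm (y - a j) ^ 2 + eps) powr (p/2 - 1) *\<^sub>R (y - a j)
      - (norm (z - a j) ^ 2 + eps) powr (p/2 - 1) *\<^sub>R (z - a j)) ((y - a j) - (z - a j))" for j
  have fpos: "f j > 0" if "j < n" for j
    unfolding f_def using assms(4)[OF that] mono_grad[OF assms(1,2), of "y - a j" "z - a j"] ne
    by (simp add: mult_pos_pos)
  have "inner (G n a w eps p y - G n a w eps p z) (y - z) = (\<Sum>j<n. f j)"
    by (simp add: G_def mu_def f_def inner_sum_left sum_subtractf[symmetric] inner_diff_left algebra_simps)
  also have "\<dots> > 0"
    using fpos assms(3) by (intro sum_pos) (auto simp: lessThan_empty_iff)
  finally show False using assms(5,6) by simp
qed


lemma tangent_powr:
  fixes A B c :: real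
  assumes "A > 0" "B > 0" "0 \<le> c" "c \<le> 1"
  shows "A powr c \<le> B powr c + c * B powr (c - 1) * (A - B)"
proof -
  have y: "A powr c * B powr (1 - c) \<le> c * A + (1 - c) * B"
    using Youngs_inequality_0[of c "1 - c" A B] assms by simp
  have bp: "B powr (c - 1) > 0" using assms by simp
  have one: "B powr (1 - c) * B powr (c - 1) = 1"
    using assms powr_add[of B "1 - c" "c - 1", symmetric] by simp
  have bb: "B * B powr (c - 1) = B powr c"
    using assms powr_add[of B 1 "c - 1"] by simp
  have "A powr c * B powr (1 - c) * B powr (c - 1) \<le> (c * A + (1 - c) * B) * B powr (c - 1)"
    using mult_right_mono[OF y] bp by simp
  also have "(c * A + (1 - c) * B) * B powr (c - 1) = c * A * B powr (c - 1) + (1 - c) * (B * B powr (c - 1))"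
    by (simp add: algebra_simps)
  finally have "A powr c * (B powr (1 - c) * B powr (c - 1)) \<le> c * A * B powr (c - 1) + (1 - c) * B powr c"
    unfolding bb by (simp add: mult.assoc)
  then have "A powr c \<le> c * A * B powr (c - 1) + (1 - c) * B powr c" unfolding one by simp
  moreover have "c * B powr (c - 1) * (A - B) = c * A * B powr (c - 1) - c * (B * B powr (c - 1))"
    by (simp add: algebra_simps)
  moreover have "(1 - c) * B powr c = B powr c - c * B powr c" by (simp add: algebra_simps)
  ultimately show ?thesis unfolding bb by linarith
qed

lemma alg_aux:
  fixes w P' P c K N N' e :: real
  shows "w * P' \<le> w * (P + c * K * ((N' + e) - (N + e))) \<Longrightarrow> w * P' \<le> w * P + c * (w * K * (N' - N))"
  by (simp add: algebra_simps)

definition M :: "nat \<Rightarrow> (nat \<Rightarrow> 'a::euclidean_space) \<Rightarrow> (nat \<Rightarrow> real) \<Rightarrow> real \<Rightarrow> real \<Rightarrow> 'a \<Rightarrow> real" where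
  "M n a w eps p y = (\<Sum>j<n. mu a w eps p y j)"

definition T :: "nat \<Rightarrow> (nat \<Rightarrow> 'a::euclidean_space) \<Rightarrow> (nat \<Rightarrow> real) \<Rightarrow> real \<Rightarrow> real \<Rightarrow> 'a \<Rightarrow> 'a" where
  "T n a w eps p y = (1 / M n a w eps p y) *\<^sub>R (\<Sum>j<n. mu a w eps p y j *\<^sub>R a j)"

lemma mu_pos:
  assumes "eps > 0" "w j > 0"
  shows "mu a w eps p y j > 0"
proof -
  have "norm (y - a j) ^ 2 + eps > 0" using assms by (smt (verit) zero_le_power2)
  then show ?thesis using assms by (simp add: mu_def)
qed

lemma M_pos:
  assumes "eps > 0" "n \<ge> 1" "\<And>j. j < n \<Longrightarrow> w j > 0"
  shows "M n a w eps p y > 0"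
  unfolding M_def using assms by (intro sum_pos) (auto simp: lessThan_empty_iff intro!: mu_pos)

lemma MM:
  fixes y :: "'a::euclidean_space"
  assumes "eps > 0" "1 \<le> p" "p \<le> 2" "n \<ge> 1" "\<And>j. j < n \<Longrightarrow> w j > 0"
  shows "Phi n a w eps p (T n a w eps p y) \<le> Phi n a w eps p y
            - (p/2) * M n a w eps p y * norm (y - T n a w eps p y) ^ 2"
proof -
  define y' where "y' = T n a w eps p y"
  define m where "m j = mu a w eps p y j" for j
  define MM where "MM = M n a w eps p y"
  have Mp: "MM > 0" unfolding MM_def by (rule M_pos[OF assms(1,4,5)])
  have sa: "(\<Sum>j<n. m j *\<^sub>R a j) = MM *\<^sub>R y'"
    using Mp by (simp add: y'_def T_def m_def MM_def)
  have tan: "w j * (norm (y' - a j) ^ 2 + eps) powr (p / 2) \<le> w j * (norm (y - a j) ^ 2 + eps) powr (p / 2)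
     + (p/2) * (m j * (norm (y' - a j) ^ 2 - norm (y - a j) ^ 2))" if "j < n" for j
  proof -
    have A: "norm (y' - a j) ^ 2 + eps > 0" "norm (y - a j) ^ 2 + eps > 0"
      using assms by (smt (verit) zero_le_power2)+
    have "(norm (y' - a j) ^ 2 + eps) powr (p / 2) \<le> (norm (y - a j) ^ 2 + eps) powr (p / 2)
      + (p/2) * (norm (y - a j) ^ 2 + eps) powr (p/2 - 1) * ((norm (y' - a j) ^ 2 + eps) - (norm (y - a j) ^ 2 + eps))"
      using tangent_powr[OF A, of "p/2"] assms by simp
    then have "w j * (norm (y' - a j) ^ 2 + eps) powr (p / 2) \<le> w j * ((norm (y - a j) ^ 2 + eps) powr (p / 2)
      + (p/2) * (norm (y - a j) ^ 2 + eps) powr (p/2 - 1) * ((norm (y' - a j) ^ 2 + eps) - (norm (y - a j) ^ 2 + eps)))"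
      using assms(5)[OF that] by (intro mult_left_mono) auto
    then show ?thesis unfolding m_def mu_def by (rule alg_aux)
  qed
  have "Phi n a w eps p y' \<le> (\<Sum>j<n. w j * (norm (y - a j) ^ 2 + eps) powr (p / 2)
     + (p/2) * (m j * (norm (y' - a j) ^ 2 - norm (y - a j) ^ 2)))"
    unfolding Phi_def by (intro sum_mono tan) auto
  also have "\<dots> = Phi n a w eps p y + (p/2) * (\<Sum>j<n. m j * (norm (y' - a j) ^ 2 - norm (y - a j) ^ 2))"
    by (simp add: Phi_def sum.distrib sum_distrib_left)
  also have "(\<Sum>j<n. m j * (norm (y' - a j) ^ 2 - norm (y - a j) ^ 2)) = - MM * norm (y - y') ^ 2"
  proof -
    have e: "norm (y' - a j) ^ 2 - norm (y - a j) ^ 2 = norm (y' - y) ^ 2 + 2 * inner (y' - y) (y - a j)" for j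
      by (simp add: power2_norm_eq_inner inner_diff_left inner_diff_right inner_commute algebra_simps)
    have "(\<Sum>j<n. m j * (norm (y' - a j) ^ 2 - norm (y - a j) ^ 2))
       = MM * norm (y' - y) ^ 2 + 2 * inner (y' - y) (\<Sum>j<n. m j *\<^sub>R (y - a j))"
    proof -
      have "(\<Sum>j<n. m j * (norm (y' - a j) ^ 2 - norm (y - a j) ^ 2))
         = (\<Sum>j<n. m j * norm (y' - y) ^ 2 + 2 * inner (y' - y) (m j *\<^sub>R (y - a j)))"
        by (intro sum.cong refl) (simp add: e distrib_left)
      also have "\<dots> = (\<Sum>j<n. m j) * norm (y' - y) ^ 2 + 2 * inner (y' - y) (\<Sum>j<n. m j *\<^sub>R (y - a j))"
        by (simp add: sum.distrib sum_distrib_right sum_distrib_left inner_sum_right)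
      finally show ?thesis by (simp add: MM_def M_def m_def)
    qed
    also have "(\<Sum>j<n. m j *\<^sub>R (y - a j)) = MM *\<^sub>R (y - y')"
      using sa by (simp add: scaleR_diff_right sum_subtractf MM_def M_def m_def scaleR_sum_left[symmetric])
    also have "MM * norm (y' - y) ^ 2 + 2 * inner (y' - y) (MM *\<^sub>R (y - y')) = - MM * norm (y - y') ^ 2"
      by (simp add: power2_norm_eq_inner inner_diff_left inner_diff_right inner_commute algebra_simps)
    finally show ?thesis .
  qed
  finally show ?thesis by (simp add: y'_def MM_def)
qed

lemma fixpoint_iff:
  assumes "eps > 0" "n \<ge> 1" "\<And>j. j < n \<Longrightarrow> w j > 0"
  shows "T n a w eps p y = y \<longleftrightarrow> G n a w eps p y = 0"
proof -
  define MM where "MM = M n a w eps p y"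
  have Mp: "MM > 0" unfolding MM_def by (rule M_pos[OF assms])
  have "G n a w eps p y = MM *\<^sub>R y - (\<Sum>j<n. mu a w eps p y j *\<^sub>R a j)"
    by (simp add: G_def MM_def M_def scaleR_diff_right sum_subtractf scaleR_sum_left)
  moreover have "T n a w eps p y = y \<longleftrightarrow> (\<Sum>j<n. mu a w eps p y j *\<^sub>R a j) = MM *\<^sub>R y"
  proof
    assume h: "T n a w eps p y = y"
    have "MM *\<^sub>R T n a w eps p y = (\<Sum>j<n. mu a w eps p y j *\<^sub>R a j)"
      using Mp unfolding T_def MM_def[symmetric] by simp
    then show "(\<Sum>j<n. mu a w eps p y j *\<^sub>R a j) = MM *\<^sub>R y" using h by simp
  next
    assume h: "(\<Sum>j<n. mu a w eps p y j *\<^sub>R a j) = MM *\<^sub>R y"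
    show "T n a w eps p y = y" using Mp unfolding T_def MM_def[symmetric] h by simp
  qed
  ultimately show ?thesis by auto
qed


lemma T_bound:
  fixes a :: "nat \<Rightarrow> 'a::euclidean_space"
  assumes "eps > 0" "n \<ge> 1" "\<And>j. j < n \<Longrightarrow> w j > 0"
  shows "norm (T n a w eps p y) \<le> (\<Sum>j<n. norm (a j))"
proof -
  define R where "R = (\<Sum>j<n. norm (a j))"
  define MM where "MM = M n a w eps p y"
  have Mp: "MM > 0" unfolding MM_def by (rule M_pos[OF assms])
  have mp: "mu a w eps p y j > 0" if "j < n" for j using mu_pos assms(1) assms(3)[OF that] by blast
  have aR: "norm (a j) \<le> R" if "j < n" for j
    unfolding R_def using that by (intro member_le_sum) auto
  have "norm (\<Sum>j<n. mu a w eps p y j *\<^sub>R a j) \<le> (\<Sum>j<n. norm (mu a w eps p y j *\<^sub>R a j))"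
    by (rule norm_sum)
  also have "\<dots> \<le> (\<Sum>j<n. mu a w eps p y j * R)"
    using mp aR by (intro sum_mono) (auto intro!: mult_left_mono simp: less_imp_le)
  also have "\<dots> = MM * R" by (simp add: MM_def M_def sum_distrib_right)
  finally have "norm (\<Sum>j<n. mu a w eps p y j *\<^sub>R a j) \<le> MM * R" .
  then show ?thesis using Mp unfolding T_def MM_def[symmetric] R_def[symmetric]
    by (simp add: field_simps)
qed

lemma M_lower:
  fixes a :: "nat \<Rightarrow> 'a::euclidean_space"
  assumes "eps > 0" "n \<ge> 1" "\<And>j. j < n \<Longrightarrow> w j > 0" "p \<le> 2" "norm y \<le> K"
  shows "w 0 * ((K + (\<Sum>j<n. norm (a j)))^2 + eps) powr (p/2 - 1) \<le> M n a w eps p y"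
proof -
  define R where "R = (\<Sum>j<n. norm (a j))"
  have a0: "norm (a 0) \<le> R" unfolding R_def using assms(2) by (intro member_le_sum) auto
  have "norm (y - a 0) \<le> K + R" using norm_triangle_ineq4[of y "a 0"] a0 assms(5) by linarith
  then have "norm (y - a 0) ^ 2 \<le> (K + R) ^ 2" by (intro power_mono) auto
  then have le: "norm (y - a 0) ^ 2 + eps \<le> (K + R) ^ 2 + eps" by simp
  have pos: "norm (y - a 0) ^ 2 + eps > 0" using assms by (smt (verit) zero_le_power2)
  have "((K + R)^2 + eps) powr (p/2 - 1) \<le> (norm (y - a 0) ^ 2 + eps) powr (p/2 - 1)"
    by (rule powr_mono2'[OF _ pos le]) (use assms in simp)
  then have "w 0 * ((K + R)^2 + eps) powr (p/2 - 1) \<le> mu a w eps p y 0"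
    unfolding mu_def using assms(3)[of 0] assms(2) by (intro mult_left_mono) auto
  also have "\<dots> \<le> M n a w eps p y"
    unfolding M_def using assms
    by (intro member_le_sum) (auto intro!: less_imp_le mu_pos)
  finally show ?thesis unfolding R_def .
qed

lemma T_cont:
  fixes a :: "nat \<Rightarrow> 'a::euclidean_space"
  assumes "eps > 0" "n \<ge> 1" "\<And>j. j < n \<Longrightarrow> w j > 0"
  shows "isCont (T n a w eps p) y"
proof -
  have "M n a w eps p y > 0" by (rule M_pos) (use assms in auto)
  then have "M n a w eps p y \<noteq> 0" by simp
  moreover have "norm (y - a j) ^ 2 + eps \<noteq> 0" for j using assms by (smt (verit) zero_le_power2)
  ultimately show ?thesis
    unfolding T_def[abs_def] M_def mu_def
    by (auto intro!: continuous_intros simp: M_def mu_def)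
qed


theorem proposition4:
  fixes n :: nat and a :: "nat \<Rightarrow> 'a::euclidean_space" and w :: "nat \<Rightarrow> real"
    and eps p :: real and x :: "nat \<Rightarrow> 'a"
  assumes "n \<ge> 1"
    and "\<And>j. j < n \<Longrightarrow> w j > 0"
    and "eps > 0"
    and "1 \<le> p" and "p \<le> 2"
    and "\<And>t. x (Suc t) = (1 / (\<Sum>j<n. mu a w eps p (x t) j)) *\<^sub>R (\<Sum>j<n. mu a w eps p (x t) j *\<^sub>R a j)"
  shows "(\<exists>!xs. stationary_point (Phi n a w eps p) xs)
    \<and> (\<forall>xs. stationary_point (Phi n a w eps p) xs \<longrightarrow>
          (\<forall>r l. strict_mono r \<and> (x \<circ> r) \<longlonglongrightarrow> l \<longrightarrow> l = xs)
          \<and> x \<longlonglongrightarrow> xs)"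
proof -
  note pos = assms(3) assms(1) assms(2)
  have p0: "p > 0" using assms by simp
  define Tm where "Tm = T n a w eps p"
  define F where "F = Phi n a w eps p"
  define R where "R = (\<Sum>j<n. norm (a j))"
  define K where "K = max (norm (x 0)) R"
  define m0 where "m0 = w 0 * ((K + R)^2 + eps) powr (p/2 - 1)"
  have xs: "x (Suc t) = Tm (x t)" for t using assms(6)[of t] by (simp add: Tm_def T_def M_def)
  have xb: "norm (x t) \<le> K" for t
  proof (cases t)
    case 0 then show ?thesis by (simp add: K_def)
  next
    case (Suc s) then show ?thesis
      using T_bound[where eps=eps and n=n and w=w, OF assms(3) assms(1) assms(2), where p=p and y="x s" and a=a] by (simp add: xs Tm_def K_def R_def)
  qed
  have m0p: "m0 > 0"
  proof -
    have "(K + R)^2 + eps > 0" using assms by (smt (verit) zero_le_power2)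
    then show ?thesis using assms(2)[of 0] assms(1) by (simp add: m0_def)
  qed
  have Mlow: "m0 \<le> M n a w eps p (x t)" for t
    unfolding m0_def R_def using M_lower[where eps=eps and n=n and w=w, OF assms(3) assms(1) assms(2) assms(5) xb[of t]] .
  have Fnn: "F y \<ge> 0" for y
    unfolding F_def Phi_def using assms(2) by (intro sum_nonneg mult_nonneg_nonneg) (auto simp: less_imp_le)
  have dec: "F (x (Suc t)) \<le> F (x t) - (p/2) * m0 * norm (x t - x (Suc t)) ^ 2" for t
  proof -
    have "F (x (Suc t)) \<le> F (x t) - (p/2) * M n a w eps p (x t) * norm (x t - x (Suc t)) ^ 2"
      using MM[where eps=eps and n=n and w=w and a=a and y="x t", OF assms(3,4,5,1) assms(2)] by (simp add: F_def xs Tm_def)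
    moreover have "(p/2) * m0 * norm (x t - x (Suc t)) ^ 2 \<le> (p/2) * M n a w eps p (x t) * norm (x t - x (Suc t)) ^ 2"
      using Mlow[of t] p0 by (intro mult_right_mono mult_left_mono) auto
    ultimately show ?thesis by linarith
  qed
  have "decseq (\<lambda>t. F (x t))"
  proof (rule decseq_SucI)
    fix t
    have "0 \<le> (p/2) * m0 * norm (x t - x (Suc t)) ^ 2" using p0 m0p by simp
    then show "F (x (Suc t)) \<le> F (x t)" using dec[of t] by linarith
  qed
  then obtain L where L: "(\<lambda>t. F (x t)) \<longlonglongrightarrow> L" using Fnn decseq_convergent by blast
  have "(\<lambda>t. F (x t) - F (x (Suc t))) \<longlonglongrightarrow> L - L"
    by (intro tendsto_diff L) (rule LIMSEQ_Suc[OF L])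
  then have hz: "(\<lambda>t. (F (x t) - F (x (Suc t))) / ((p/2) * m0)) \<longlonglongrightarrow> 0"
    using tendsto_divide_zero by fastforce
  have "(\<lambda>t. norm (x t - x (Suc t)) ^ 2) \<longlonglongrightarrow> 0"
  proof (rule tendsto_sandwich[OF _ _ _ hz])
    show "\<forall>\<^sub>F t in sequentially. 0 \<le> norm (x t - x (Suc t)) ^ 2" by simp
    show "\<forall>\<^sub>F t in sequentially. norm (x t - x (Suc t)) ^ 2 \<le> (F (x t) - F (x (Suc t))) / ((p/2) * m0)"
      using dec p0 m0p by (simp add: field_simps mult.commute)
  qed simp
  then have "(\<lambda>t. sqrt (norm (x t - x (Suc t)) ^ 2)) \<longlonglongrightarrow> sqrt 0"
    by (rule tendsto_real_sqrt)
  then have "(\<lambda>t. norm (x (Suc t) - x t)) \<longlonglongrightarrow> 0" by (simp add: norm_minus_commute)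
  then have dz: "(\<lambda>t. x (Suc t) - x t) \<longlonglongrightarrow> 0" by (simp add: tendsto_norm_zero_iff)
  have Tc: "isCont Tm y" for y unfolding Tm_def by (rule T_cont[where eps=eps and n=n and w=w, OF assms(3) assms(1) assms(2)])
  have sub_stat: "G n a w eps p l = 0" if r: "strict_mono r" and lim: "(x \<circ> r) \<longlonglongrightarrow> l" for r l
  proof -
    have l1: "(\<lambda>k. Tm (x (r k))) \<longlonglongrightarrow> Tm l"
      using isCont_tendsto_compose[OF Tc lim[unfolded comp_def]] .
    have "(\<lambda>k. x (Suc (r k)) - x (r k)) \<longlonglongrightarrow> 0"
      using LIMSEQ_subseq_LIMSEQ[OF dz r] by (simp add: comp_def)
    then have "(\<lambda>k. (x (Suc (r k)) - x (r k)) + x (r k)) \<longlonglongrightarrow> 0 + l"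
      using lim by (intro tendsto_add) (auto simp: comp_def)
    then have "(\<lambda>k. Tm (x (r k))) \<longlonglongrightarrow> l" by (simp add: xs)
    then have "Tm l = l" using l1 LIMSEQ_unique by blast
    then show ?thesis using fixpoint_iff[where eps=eps and n=n and w=w and a=a and p=p and y=l, OF assms(3) assms(1) assms(2)] unfolding Tm_def by blast
  qed
  have stat_iff: "stationary_point F y \<longleftrightarrow> G n a w eps p y = 0" for y
    unfolding F_def using stationary_iff[OF assms(3) p0] .
  have sc: "seq_compact (cball (0::'a) K)" by (intro compact_imp_seq_compact compact_cball)
  have xin: "x t \<in> cball 0 K" for t using xb[of t] by simp
  have xin': "\<forall>t. x t \<in> cball 0 K" using xin by blast
  obtain l0 r0 where r0: "l0 \<in> cball 0 K" "strict_mono (r0::nat\<Rightarrow>nat)" "(x \<circ> r0) \<longlonglongrightarrow> l0"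
    by (rule seq_compactE[OF sc xin'])
  have st0: "stationary_point F l0" using sub_stat[OF r0(2,3)] stat_iff by simp
  have uniq: "y = z" if "stationary_point F y" "stationary_point F z" for y z
    using G_unique[where eps=eps and n=n and w=w and a=a and p=p, OF assms(3,4,1) assms(2)] that stat_iff by blast
  have conv: "x \<longlonglongrightarrow> xs" if sxs: "stationary_point F xs" for xs
  proof (rule ccontr)
    assume nc: "\<not> x \<longlonglongrightarrow> xs"
    then obtain e where e: "e > 0" "\<not> (\<forall>\<^sub>F t in sequentially. dist (x t) xs < e)"
      unfolding tendsto_iff by blast
    have "\<forall>N. \<exists>t\<ge>N. dist (x t) xs \<ge> e"
    proof
      fix N show "\<exists>t\<ge>N. dist (x t) xs \<ge> e"
      proof (rule ccontr)
        assume "\<not> (\<exists>t\<ge>N. dist (x t) xs \<ge> e)"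
        then have "\<forall>t\<ge>N. dist (x t) xs < e" by (meson not_le)
        then have "eventually (\<lambda>t. dist (x t) xs < e) sequentially"
          unfolding eventually_sequentially by blast
        with e(2) show False by simp
      qed
    qed
    then have "infinite {t. dist (x t) xs \<ge> e}"
      by (simp add: infinite_nat_iff_unbounded_le)
    from infinite_enumerate[OF this] obtain r :: "nat \<Rightarrow> nat" where r: "strict_mono r" "\<And>k. r k \<in> {t. dist (x t) xs \<ge> e}"
      by auto
    have xr: "\<forall>k. (x \<circ> r) k \<in> cball 0 K" using xin by simp
    obtain l r2 where r2: "l \<in> cball 0 K" "strict_mono (r2::nat\<Rightarrow>nat)" "((x \<circ> r) \<circ> r2) \<longlonglongrightarrow> l"
      by (rule seq_compactE[OF sc xr])
    have sm: "strict_mono (r \<circ> r2)" using r(1) r2(2) by (rule strict_mono_o)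
    have lm: "(x \<circ> (r \<circ> r2)) \<longlonglongrightarrow> l" using r2(3) by (simp add: comp_assoc)
    have "stationary_point F l" using sub_stat[OF sm lm] stat_iff by simp
    then have "l = xs" using uniq sxs by blast
    then have "\<forall>\<^sub>F k in sequentially. dist (x (r (r2 k))) xs < e"
      using r2(3) e(1) unfolding tendsto_iff by (simp add: comp_def)
    then obtain N where "\<forall>k\<ge>N. dist (x (r (r2 k))) xs < e" unfolding eventually_sequentially by blast
    then have "dist (x (r (r2 N))) xs < e" by simp
    then show False using r(2)[of "r2 N"] by simp
  qed
  show ?thesis
    unfolding F_def[symmetric]
  proof (intro conjI allI impI)
    show "\<exists>!xs. stationary_point F xs" using st0 uniq by (intro ex1I) auto
  next
    fix xs r l assume sxs: "stationary_point F xs" and h: "strict_mono r \<and> (x \<circ> r) \<longlonglongrightarrow> l"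
    then have "stationary_point F l" using sub_stat[of r l] stat_iff by simp
    then show "l = xs" using uniq sxs by blast
  next
    fix xs assume "stationary_point F xs" then show "x \<longlonglongrightarrow> xs" by (rule conv)
  qed
qed

end
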